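(* Let $(\mathfrak{A},\mathfrak{A}_0)$ be a CQ*-algebra as in the context, let $H=H^*\in\mathfrak{A}_0$, $\omega\in E(\mathfrak{A}_0)$ and $\alpha\in\mathbb{C}$. Consider the statements: (i) $\overline{\omega}$ is an eigenstate of $H$ with eigenvalue $\alpha$; (ii) $\omega$ is an eigenstate of $H$ with eigenvalue $\alpha$; (iii) for every $t\in\mathbb{R}$, $\overline{\omega}$ is an eigenstate of $e^{itH}$ with eigenvalue $e^{it\alpha}$; (iv) for every $t\in\mathbb{R}$, $\omega$ is an eigenstate of $e^{itH}$ with eigenvalue $e^{it\alpha}$. Then (i)$\Leftrightarrow$(ii), (iii)$\Leftrightarrow$(iv), and (ii)$\Rightarrow$(iv).
   Context: Let $\mathfrak{A}_0$ be a unital C*-algebra with C*-norm $\|\cdot\|_0$ and unit $I$, and $\|\cdot\|$ another norm on $\mathfrak{A}_0$ with $\|A\|\le\|A\|_0$, $\|AB\|\le\|A\|\,\|B\|_0$, $\|A^*\|=\|A\|$. $\mathfrak{A}$ is the $\|\cdot\|$-completion of $\mathfrak{A}_0$, with $XA:=\lim A_nA$, $AX:=\lim AA_n$ for $X\in\mathfrak{A}$, $A\in\mathfrak{A}_0$, $A_n\in\mathfrak{A}_0$, $\|A_n-X\|\to0$. $E(\mathfrak{A}_0)$ is the set of positive linear functionals $\omega$ on $\mathfrak{A}_0$ with $\omega(I)=1$ and $|\omega(A)|\le\gamma\|A\|$ for some $\gamma>0$; $\overline{\omega}$ is its $\|\cdot\|$-continuous extension to $\mathfrak{A}$. For $Y\in\mathfrak{A}$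 and $\beta\in\mathbb{C}$, $\overline{\omega}$ is an eigenstate of $Y$ with eigenvalue $\beta$ if $\overline{\omega}(AY)=\beta\,\overline{\omega}(A)$ for all $A\in\mathfrak{A}_0$; for $Y\in\mathfrak{A}_0$, $\omega$ is an eigenstate of $Y$ with eigenvalue $\beta$ if $\omega(AY)=\beta\,\omega(A)$ for all $A\in\mathfrak{A}_0$. $e^{itH}\in\mathfrak{A}_0$ is defined by functional calculus. *)

theory Defs
  imports "HOL-Analysis.Analysis"
begin

text \<open>A unital complex algebra is encoded as a unital real Banach algebra together with a
  central element J with J*J = -1 (J plays the role of i1); complex scalar multiplication
  is then c.x = Re c x + Im c (J x).\<close>

definition cscale :: "'a::real_normed_algebra_1 \<Rightarrow> complex \<Rightarrow> 'a \<Rightarrow> 'a" where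
  "cscale J c x = Re c *\<^sub>R x + Im c *\<^sub>R (J * x)"

definition unital_cstar_algebra :: "'a::{real_normed_algebra_1,banach} \<Rightarrow> ('a \<Rightarrow> 'a) \<Rightarrow> bool" where
  "unital_cstar_algebra J st \<longleftrightarrow>
     (\<forall>x. J * x = x * J) \<and> J * J = - 1 \<and>
     (\<forall>c x. norm (cscale J c x) = cmod c * norm x) \<and>
     (\<forall>x y. st (x + y) = st x + st y) \<and>
     (\<forall>c x. st (cscale J c x) = cscale J (cnj c) (st x)) \<and>
     (\<forall>x y. st (x * y) = st y * st x) \<and>
     (\<forall>x. st (st x) = x) \<and>
     (\<forall>x. norm (st x * x) = (norm x)\<^sup>2)"

definition cq_norm :: "'a::{real_normed_algebra_1,banach} \<Rightarrow> ('a \<Rightarrow> 'a) \<Rightarrow> ('a \<Rightarrow> real) \<Rightarrow> bool" where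
  "cq_norm J st n \<longleftrightarrow>
     (\<forall>x. n x = 0 \<longleftrightarrow> x = 0) \<and>
     (\<forall>x y. n (x + y) \<le> n x + n y) \<and>
     (\<forall>c x. n (cscale J c x) = cmod c * n x) \<and>
     (\<forall>x. n x \<le> norm x) \<and>
     (\<forall>x y. n (x * y) \<le> n x * norm y) \<and>
     (\<forall>x. n (st x) = n x)"

definition is_completion :: "('a::real_normed_vector \<Rightarrow> real) \<Rightarrow> ('a \<Rightarrow> 'b::banach) \<Rightarrow> bool" where
  "is_completion n j \<longleftrightarrow> linear j \<and> (\<forall>x. norm (j x) = n x) \<and> closure (range j) = UNIV"

definition lmul_compl :: "('a::real_normed_algebra_1 \<Rightarrow> 'b::real_normed_vector) \<Rightarrow> 'a \<Rightarrow> 'b \<Rightarrow> 'b" where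
  "lmul_compl j A X = (THE Y. \<forall>s. (\<lambda>k. j (s k)) \<longlonglongrightarrow> X \<longrightarrow> (\<lambda>k. j (A * s k)) \<longlonglongrightarrow> Y)"

definition ext_fun :: "('a \<Rightarrow> 'b::real_normed_vector) \<Rightarrow> ('a \<Rightarrow> complex) \<Rightarrow> 'b \<Rightarrow> complex" where
  "ext_fun j \<omega> X = (THE c. \<forall>s. (\<lambda>k. j (s k)) \<longlonglongrightarrow> X \<longrightarrow> (\<lambda>k. \<omega> (s k)) \<longlonglongrightarrow> c)"

definition states_E :: "'a::{real_normed_algebra_1,banach} \<Rightarrow> ('a \<Rightarrow> 'a) \<Rightarrow> ('a \<Rightarrow> real) \<Rightarrow> ('a \<Rightarrow> complex) set" where
  "states_E J st n = {\<omega>.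
     (\<forall>x y. \<omega> (x + y) = \<omega> x + \<omega> y) \<and>
     (\<forall>c x. \<omega> (cscale J c x) = c * \<omega> x) \<and>
     (\<forall>x. \<omega> (st x * x) \<in> \<real> \<and> 0 \<le> Re (\<omega> (st x * x))) \<and>
     \<omega> 1 = 1 \<and>
     (\<exists>\<gamma>>0. \<forall>x. cmod (\<omega> x) \<le> \<gamma> * n x)}"

definition eigenstate_compl :: "('a::real_normed_algebra_1 \<Rightarrow> 'b::real_normed_vector) \<Rightarrow> ('a \<Rightarrow> complex) \<Rightarrow> 'b \<Rightarrow> complex \<Rightarrow> bool" where
  "eigenstate_compl j \<omega> Y \<beta> \<longleftrightarrow> (\<forall>A. ext_fun j \<omega> (lmul_compl j A Y) = \<beta> * ext_fun j \<omega> (j A))"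

definition eigenstate :: "('a::times \<Rightarrow> complex) \<Rightarrow> 'a \<Rightarrow> complex \<Rightarrow> bool" where
  "eigenstate \<omega> Y \<beta> \<longleftrightarrow> (\<forall>A. \<omega> (A * Y) = \<beta> * \<omega> A)"

end

theory Submission
  imports Defs
begin

lemma om_diff:
  fixes \<omega> :: "'a::ab_group_add \<Rightarrow> 'b::ab_group_add"
  assumes "\<forall>x y. \<omega> (x + y) = \<omega> x + \<omega> y"
  shows "\<omega> (x - y) = \<omega> x - \<omega> y"
proof -
  have "\<omega> (x - y + y) = \<omega> (x - y) + \<omega> y" using assms by blast
  then have "\<omega> x = \<omega> (x - y) + \<omega> y" by simp
  then show ?thesis by simp
qed

lemma ext_fun_j:
  fixes j :: "'a::real_normed_vector \<Rightarrow> 'b::banach" and \<omega> :: "'a \<Rightarrow> complex"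
  assumes lin: "linear j" and nj: "\<forall>x. norm (j x) = n x"
    and add: "\<forall>x y. \<omega> (x + y) = \<omega> x + \<omega> y"
    and g: "\<gamma> > 0" "\<forall>x. cmod (\<omega> x) \<le> \<gamma> * n x"
  shows "ext_fun j \<omega> (j A) = \<omega> A"
proof -
  have P: "(\<lambda>k. \<omega> (s k)) \<longlonglongrightarrow> \<omega> A" if "(\<lambda>k. j (s k)) \<longlonglongrightarrow> j A" for s
  proof -
    have "(\<lambda>k. norm (j (s k) - j A)) \<longlonglongrightarrow> 0" using that
      using LIM_zero tendsto_norm_zero by blast
    hence lim: "(\<lambda>k. \<gamma> * norm (j (s k) - j A)) \<longlonglongrightarrow> 0"
      using tendsto_mult_right_zero by blast
    have le: "norm (\<omega> (s k) - \<omega> A) \<le> \<gamma> * norm (j (s k) - j A)" for k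
    proof -
      have "\<omega> (s k) - \<omega> A = \<omega> (s k - A)" by (rule om_diff[OF add, symmetric])
      hence "norm (\<omega> (s k) - \<omega> A) = cmod (\<omega> (s k - A))" by (simp only:)
      also have "\<dots> \<le> \<gamma> * n (s k - A)" using g by blast
      also have "n (s k - A) = norm (j (s k) - j A)"
        using nj[rule_format, of "s k - A"] linear_diff[OF lin, of "s k" A] by (simp only:)
      finally show ?thesis .
    qed
    have ev: "\<forall>\<^sub>F k in sequentially. norm (\<omega> (s k) - \<omega> A) \<le> \<gamma> * norm (j (s k) - j A)"
      by (rule always_eventually) (rule allI, rule le)
    have "(\<lambda>k. \<omega> (s k) - \<omega> A) \<longlonglongrightarrow> 0" by (rule Lim_null_comparison[OF ev lim])
    thus ?thesis by (rule Lim_null[THEN iffD2])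
  qed
  show ?thesis unfolding ext_fun_def
  proof (rule the_equality)
    show "\<forall>s. (\<lambda>k. j (s k)) \<longlonglongrightarrow> j A \<longrightarrow> (\<lambda>k. \<omega> (s k)) \<longlonglongrightarrow> \<omega> A" using P by blast
  next
    fix c assume "\<forall>s. (\<lambda>k. j (s k)) \<longlonglongrightarrow> j A \<longrightarrow> (\<lambda>k. \<omega> (s k)) \<longlonglongrightarrow> c"
    hence "(\<lambda>k. j ((\<lambda>_. A) k)) \<longlonglongrightarrow> j A \<longrightarrow> (\<lambda>k. \<omega> ((\<lambda>_. A) k)) \<longlonglongrightarrow> c" by (rule spec)
    hence "(\<lambda>k. \<omega> A) \<longlonglongrightarrow> c" by simp
    hence "\<omega> A = c" by (rule LIMSEQ_const_iff[THEN iffD1])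
    thus "c = \<omega> A" by (rule sym)
  qed
qed

lemma lmul_j:
  fixes j :: "'a::real_normed_algebra_1 \<Rightarrow> 'b::banach"
  assumes lin: "linear j" and nj: "\<forall>x. norm (j x) = n x"
    and stadd: "\<forall>x y. st (x + y) = st x + st y"
    and stmul: "\<forall>x y. st (x * y) = st y * st x"
    and nst: "\<forall>x. n (st x) = n x"
    and nmul: "\<forall>x y. n (x * y) \<le> n x * norm y"
  shows "lmul_compl j A (j Y) = j (A * Y)"
proof -
  have P: "(\<lambda>k. j (A * s k)) \<longlonglongrightarrow> j (A * Y)" if "(\<lambda>k. j (s k)) \<longlonglongrightarrow> j Y" for s
  proof -
    have "(\<lambda>k. norm (j (s k) - j Y)) \<longlonglongrightarrow> 0" using that
      using LIM_zero tendsto_norm_zero by blast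
    hence lim: "(\<lambda>k. norm (j (s k) - j Y) * norm (st A)) \<longlonglongrightarrow> 0"
      using tendsto_mult_left_zero by blast
    have le: "norm (j (A * s k) - j (A * Y)) \<le> norm (j (s k) - j Y) * norm (st A)" for k
    proof -
      have dd: "A * s k - A * Y = A * (s k - Y)" by (simp only: right_diff_distrib)
      have "norm (j (A * s k) - j (A * Y)) = n (A * (s k - Y))"
        using nj[rule_format, of "A * s k - A * Y"] linear_diff[OF lin, of "A * s k" "A * Y"] dd by (simp only:)
      also have "\<dots> = n (st (A * (s k - Y)))" using nst by simp
      also have "\<dots> = n (st (s k - Y) * st A)" using stmul by simp
      also have "\<dots> \<le> n (st (s k - Y)) * norm (st A)" using nmul by blast
      also have "n (st (s k - Y)) = n (s k - Y)" using nst by simp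
      also have "n (s k - Y) = norm (j (s k) - j Y)"
        using nj[rule_format, of "s k - Y"] linear_diff[OF lin, of "s k" Y] by (simp only:)
      finally show ?thesis .
    qed
    have ev: "\<forall>\<^sub>F k in sequentially. norm (j (A * s k) - j (A * Y)) \<le> norm (j (s k) - j Y) * norm (st A)"
      by (rule always_eventually) (rule allI, rule le)
    have "(\<lambda>k. j (A * s k) - j (A * Y)) \<longlonglongrightarrow> 0" by (rule Lim_null_comparison[OF ev lim])
    thus ?thesis by (rule Lim_null[THEN iffD2])
  qed
  show ?thesis unfolding lmul_compl_def
  proof (rule the_equality)
    show "\<forall>s. (\<lambda>k. j (s k)) \<longlonglongrightarrow> j Y \<longrightarrow> (\<lambda>k. j (A * s k)) \<longlonglongrightarrow> j (A * Y)" using P by blast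
  next
    fix c assume "\<forall>s. (\<lambda>k. j (s k)) \<longlonglongrightarrow> j Y \<longrightarrow> (\<lambda>k. j (A * s k)) \<longlonglongrightarrow> c"
    hence "(\<lambda>k. j ((\<lambda>_. Y) k)) \<longlonglongrightarrow> j Y \<longrightarrow> (\<lambda>k. j (A * (\<lambda>_. Y) k)) \<longlonglongrightarrow> c" by (rule spec)
    hence "(\<lambda>k. j (A * Y)) \<longlonglongrightarrow> c" by simp
    hence "j (A * Y) = c" by (rule LIMSEQ_const_iff[THEN iffD1])
    thus "c = j (A * Y)" by (rule sym)
  qed
qed


lemma eig_equiv:
  fixes j :: "'a::real_normed_algebra_1 \<Rightarrow> 'b::banach" and \<omega> :: "'a \<Rightarrow> complex"
  assumes lin: "linear j" and nj: "\<forall>x. norm (j x) = n x"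
    and stadd: "\<forall>x y. st (x + y) = st x + st y"
    and stmul: "\<forall>x y. st (x * y) = st y * st x"
    and nst: "\<forall>x. n (st x) = n x"
    and nmul: "\<forall>x y. n (x * y) \<le> n x * norm y"
    and add: "\<forall>x y. \<omega> (x + y) = \<omega> x + \<omega> y"
    and g: "\<gamma> > 0" "\<forall>x. cmod (\<omega> x) \<le> \<gamma> * n x"
  shows "eigenstate_compl j \<omega> (j Y) \<beta> \<longleftrightarrow> eigenstate \<omega> Y \<beta>"
  unfolding eigenstate_compl_def eigenstate_def
  by (simp only: lmul_j[OF lin nj stadd stmul nst nmul] ext_fun_j[OF lin nj add g])

lemma exp_eig:
  fixes J H A :: "'a::{real_normed_algebra_1,banach}" and \<omega> :: "'a \<Rightarrow> complex"
  assumes add: "\<forall>x y. \<omega> (x + y) = \<omega> x + \<omega> y"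
    and cs: "\<forall>c x. \<omega> (cscale J c x) = c * \<omega> x"
    and bd: "\<forall>x. cmod (\<omega> x) \<le> \<gamma> * norm x" and g0: "\<gamma> \<ge> 0"
    and Jc: "\<forall>x. J * x = x * J"
    and eig: "\<forall>B. \<omega> (B * H) = \<alpha> * \<omega> B"
  shows "\<omega> (A * exp (t *\<^sub>R (J * H))) = exp (\<i> * of_real t * \<alpha>) * \<omega> A"
proof -
  define X where "X = t *\<^sub>R (J * H)"
  define c where "c = \<i> * of_real t * \<alpha>"
  have oJ: "\<omega> (J * x) = \<i> * \<omega> x" for x
    using cs[rule_format, of \<i> x] by (simp add: cscale_def)
  have oR: "\<omega> (r *\<^sub>R x) = of_real r * \<omega> x" for r x
    using cs[rule_format, of "of_real r" x] by (simp add: cscale_def)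
  have oX: "\<omega> (B * X) = c * \<omega> B" for B
  proof -
    have "B * (J * H) = J * (B * H)"
      by (metis Jc mult.assoc)
    hence "B * X = t *\<^sub>R (J * (B * H))" unfolding X_def
      by simp
    hence "\<omega> (B * X) = of_real t * (\<i> * (\<alpha> * \<omega> B))" using oR oJ eig by simp
    thus ?thesis unfolding c_def by (simp add: algebra_simps)
  qed
  have oXk: "\<omega> (B * X ^ k) = c ^ k * \<omega> B" for B k
  proof (induction k arbitrary: B)
    case 0 then show ?case by simp
  next
    case (Suc k)
    have "B * X ^ Suc k = (B * X ^ k) * X" by (simp only: power_Suc2 mult.assoc)
    hence "\<omega> (B * X ^ Suc k) = c * (c ^ k * \<omega> B)" using oX[of "B * X ^ k"] Suc by simp
    then show ?case by (simp add: mult.assoc)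
  qed
  define f where "f x = \<omega> (A * x)" for x
  have bl: "bounded_linear f"
  proof (rule bounded_linear_intro[where K = "\<gamma> * norm A"])
    show "f (x + y) = f x + f y" for x y unfolding f_def using add by (simp add: distrib_left)
    show "f (r *\<^sub>R x) = r *\<^sub>R f x" for r x
    proof -
      have "f (r *\<^sub>R x) = \<omega> (r *\<^sub>R (A * x))" unfolding f_def by simp
      also have "\<dots> = of_real r * f x" unfolding f_def using oR by simp
      also have "\<dots> = r *\<^sub>R f x" by (simp add: scaleR_conv_of_real)
      finally show ?thesis .
    qed
    show "norm (f x) \<le> norm x * (\<gamma> * norm A)" for x
    proof -
      have "norm (f x) \<le> \<gamma> * norm (A * x)" unfolding f_def using bd by blast
      also have "\<dots> \<le> \<gamma> * (norm A * norm x)" by (rule mult_left_mono[OF norm_mult_ineq g0])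
      also have "\<dots> = norm x * (\<gamma> * norm A)" by (simp only: ac_simps)
      finally show ?thesis .
    qed
  qed
  have "(\<lambda>k. f (X ^ k /\<^sub>R fact k)) sums f (exp X)"
    using bounded_linear.sums[OF bl exp_converges] .
  moreover have "f (X ^ k /\<^sub>R fact k) = (c ^ k /\<^sub>R fact k) * \<omega> A" for k
  proof -
    have "f (X ^ k /\<^sub>R fact k) = \<omega> (inverse (fact k) *\<^sub>R (A * X ^ k))"
      unfolding f_def by (simp only: mult_scaleR_right)
    also have "\<dots> = of_real (inverse (fact k)) * (c ^ k * \<omega> A)" by (simp only: oR oXk)
    also have "\<dots> = (c ^ k /\<^sub>R fact k) * \<omega> A" by (simp only: scaleR_conv_of_real mult.assoc)
    finally show ?thesis .
  qed
  ultimately have "(\<lambda>k. (c ^ k /\<^sub>R fact k) * \<omega> A) sums f (exp X)" by (simp only:)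
  moreover have "(\<lambda>k. (c ^ k /\<^sub>R fact k) * \<omega> A) sums (exp c * \<omega> A)"
    using sums_mult2[OF exp_converges] .
  ultimately have "f (exp X) = exp c * \<omega> A" by (rule sums_unique2)
  thus ?thesis unfolding f_def X_def c_def .
qed

theorem lemma5p3:
  fixes J H :: "'a::{real_normed_algebra_1,banach}"
    and st :: "'a \<Rightarrow> 'a" and n :: "'a \<Rightarrow> real"
    and j :: "'a \<Rightarrow> 'b::banach"
    and \<omega> :: "'a \<Rightarrow> complex" and \<alpha> :: complex
  assumes "unital_cstar_algebra J st"
    and "cq_norm J st n"
    and "is_completion n j"
    and "st H = H"
    and "\<omega> \<in> states_E J st n"
  shows "(eigenstate_compl j \<omega> (j H) \<alpha> \<longleftrightarrow> eigenstate \<omega> H \<alpha>)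
    \<and> ((\<forall>t::real. eigenstate_compl j \<omega> (j (exp (t *\<^sub>R (J * H)))) (exp (\<i> * of_real t * \<alpha>)))
        \<longleftrightarrow> (\<forall>t::real. eigenstate \<omega> (exp (t *\<^sub>R (J * H))) (exp (\<i> * of_real t * \<alpha>))))
    \<and> (eigenstate \<omega> H \<alpha> \<longrightarrow>
        (\<forall>t::real. eigenstate \<omega> (exp (t *\<^sub>R (J * H))) (exp (\<i> * of_real t * \<alpha>))))"
proof -
  have Jc: "\<forall>x. J * x = x * J" and stadd: "\<forall>x y. st (x + y) = st x + st y"
    and stmul: "\<forall>x y. st (x * y) = st y * st x"
    using assms(1) unfolding unital_cstar_algebra_def by blast+
  have nst: "\<forall>x. n (st x) = n x" and nmul: "\<forall>x y. n (x * y) \<le> n x * norm y"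
    and nle: "\<forall>x. n x \<le> norm x"
    using assms(2) unfolding cq_norm_def by blast+
  have lin: "linear j" and nj: "\<forall>x. norm (j x) = n x"
    using assms(3) unfolding is_completion_def by blast+
  have add: "\<forall>x y. \<omega> (x + y) = \<omega> x + \<omega> y" and cs: "\<forall>c x. \<omega> (cscale J c x) = c * \<omega> x"
    and "\<exists>\<gamma>>0. \<forall>x. cmod (\<omega> x) \<le> \<gamma> * n x"
    using assms(5) unfolding states_E_def by blast+
  then obtain \<gamma> where g: "\<gamma> > 0" "\<forall>x. cmod (\<omega> x) \<le> \<gamma> * n x" by blast
  have bd: "\<forall>x. cmod (\<omega> x) \<le> \<gamma> * norm x"
    using g nle by (meson dual_order.trans mult_left_mono less_imp_le)
  note E = eig_equiv[OF lin nj stadd stmul nst nmul add g]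
  have P3: "eigenstate \<omega> H \<alpha> \<longrightarrow>
        (\<forall>t::real. eigenstate \<omega> (exp (t *\<^sub>R (J * H))) (exp (\<i> * of_real t * \<alpha>)))"
  proof (intro impI allI)
    fix t :: real assume "eigenstate \<omega> H \<alpha>"
    hence eg: "\<forall>B. \<omega> (B * H) = \<alpha> * \<omega> B" unfolding eigenstate_def .
    show "eigenstate \<omega> (exp (t *\<^sub>R (J * H))) (exp (\<i> * of_real t * \<alpha>))"
      unfolding eigenstate_def
      by (rule allI, rule exp_eig[OF add cs bd less_imp_le[OF g(1)] Jc eg])
  qed
  have P1: "eigenstate_compl j \<omega> (j H) \<alpha> \<longleftrightarrow> eigenstate \<omega> H \<alpha>" by (rule E)
  have P2: "(\<forall>t::real. eigenstate_compl j \<omega> (j (exp (t *\<^sub>R (J * H)))) (exp (\<i> * of_real t * \<alpha>)))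
        \<longleftrightarrow> (\<forall>t::real. eigenstate \<omega> (exp (t *\<^sub>R (J * H))) (exp (\<i> * of_real t * \<alpha>)))"
    by (simp only: E)
  show ?thesis using P1 P2 P3 by (intro conjI)
qed

end
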